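(* Let $\mathcal{H}$ be a hypergraph on vertex set $V$ with $\textsc{VC-dim}(\mathcal{H})<k$. Then $|\mathrm{ext}_k(\mathcal{H})|=O(|V|^k)$.
   Context: A hypergraph $\mathcal{H}$ on $V$ is a family of subsets (hyperedges) of $V$. A $k$-trace on $V$ is a pair $(T,S)$ with $S\subseteq V$, $|S|=k$, $T\subseteq S$; a set $F\subseteq V$ realizes $(T,S)$ if $F\cap S=T$. $\mathrm{traces}_k(F)$ is the set of $k$-traces realized by $F$, and $\mathrm{traces}_k(\mathcal{H})=\bigcup_{F\in\mathcal{H}}\mathrm{traces}_k(F)$. The $k$-extension $\mathrm{ext}_k(\mathcal{H})$ is the hypergraph on $V$ whose hyperedges are all $E\subseteq V$ with $\mathrm{traces}_k(E)\subseteq\mathrm{traces}_k(\mathcal{H})$. A set $U$ is shattered by $\mathcal{H}$ if for each $U'\subseteq U$ some $F\in\mathcal{H}$ has $F\cap U=U'$; $\textsc{VC-dim}(\mathcal{H})$ is the largest size of a shattered set. *)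

theory Defs
  imports Complex_Main
begin

definition traces :: "nat \<Rightarrow> 'a set \<Rightarrow> 'a set \<Rightarrow> ('a set \<times> 'a set) set" where
  "traces k V F = {(T, S). S \<subseteq> V \<and> card S = k \<and> T \<subseteq> S \<and> F \<inter> S = T}"

definition traces_hg :: "nat \<Rightarrow> 'a set \<Rightarrow> 'a set set \<Rightarrow> ('a set \<times> 'a set) set" where
  "traces_hg k V H = (\<Union>F\<in>H. traces k V F)"

definition ext :: "nat \<Rightarrow> 'a set \<Rightarrow> 'a set set \<Rightarrow> 'a set set" where
  "ext k V H = {E. E \<subseteq> V \<and> traces k V E \<subseteq> traces_hg k V H}"

definition shatters :: "'a set set \<Rightarrow> 'a set \<Rightarrow> bool" where
  "shatters H U \<longleftrightarrow> (\<forall>U'\<subseteq>U. \<exists>F\<in>H. F \<inter> U = U')"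

definition vc_dim_less :: "'a set \<Rightarrow> 'a set set \<Rightarrow> nat \<Rightarrow> bool" where
  "vc_dim_less V H k \<longleftrightarrow> (\<forall>U\<subseteq>V. shatters H U \<longrightarrow> card U < k)"

end

theory Submission
  imports Defs
begin

lemma pajor:
  assumes "finite V"
  shows "\<forall>F. F \<subseteq> Pow V \<longrightarrow> card F \<le> card {U \<in> Pow V. shatters F U}"
  using assms
proof (induction V rule: finite_induct)
  case empty
  show ?case
  proof (intro allI impI)
    fix F :: "'a set set" assume F: "F \<subseteq> Pow {}"
    show "card F \<le> card {U \<in> Pow {}. shatters F U}"
    proof (cases "F = {}")
      case True then show ?thesis by simp
    next
      case False
      then have "F = {{}}" using F by auto
      then have "{U \<in> Pow {}. shatters F U} = {{}}" by (auto simp: shatters_def)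
      then show ?thesis using \<open>F = {{}}\<close> by simp
    qed
  qed
next
  case (insert x V)
  show ?case
  proof (intro allI impI)
    fix F assume F: "F \<subseteq> Pow (insert x V)"
    define F1 where "F1 = {A \<in> F. x \<notin> A}"
    define F2 where "F2 = (\<lambda>A. A - {x}) ` {A \<in> F. x \<in> A}"
    have fin: "finite (Pow (insert x V))" using insert by simp
    have finF: "finite F" using F fin finite_subset by blast
    have F1V: "F1 \<subseteq> Pow V" using F unfolding F1_def by auto
    have F2V: "F2 \<subseteq> Pow V" using F unfolding F2_def by auto
    have inj: "inj_on (\<lambda>A. A - {x}) {A \<in> F. x \<in> A}"
      by (rule inj_onI) (metis insert_Diff mem_Collect_eq)
    have "card F = card F1 + card {A \<in> F. x \<in> A}"
    proof -
      have "F = F1 \<union> {A \<in> F. x \<in> A}" unfolding F1_def by auto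
      moreover have "F1 \<inter> {A \<in> F. x \<in> A} = {}" unfolding F1_def by auto
      ultimately show ?thesis using finF card_Un_disjoint
        by (metis (no_types, lifting) finite_Un)
    qed
    also have "card {A \<in> F. x \<in> A} = card F2" unfolding F2_def using card_image[OF inj] by simp
    finally have cF: "card F = card F1 + card F2" .
    define S1 where "S1 = {U \<in> Pow V. shatters F1 U}"
    define S2 where "S2 = {U \<in> Pow V. shatters F2 U}"
    have finV: "finite (Pow V)" using insert by simp
    have h1: "card F1 \<le> card S1" using insert.IH F1V unfolding S1_def by blast
    have h2: "card F2 \<le> card S2" using insert.IH F2V unfolding S2_def by blast
    have fS1: "finite S1" "finite S2" using finV unfolding S1_def S2_def by auto
    have "card S1 + card S2 = card (S1 \<union> S2) + card (S1 \<inter> S2)"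
      using card_Un_Int fS1 by blast
    also have "card (S1 \<inter> S2) = card (insert x ` (S1 \<inter> S2))"
    proof -
      have "inj_on (insert x) (S1 \<inter> S2)"
        using insert.hyps(2) unfolding S1_def S2_def
        by (intro inj_onI) (metis IntD1 PowD insert_absorb insert_ident mem_Collect_eq subsetD)
      then show ?thesis by (simp add: card_image)
    qed
    also have "card (S1 \<union> S2) + card (insert x ` (S1 \<inter> S2))
        = card ((S1 \<union> S2) \<union> insert x ` (S1 \<inter> S2))"
    proof -
      have "(S1 \<union> S2) \<inter> insert x ` (S1 \<inter> S2) = {}"
        using insert.hyps(2) unfolding S1_def S2_def by auto
      then show ?thesis using fS1 by (simp add: card_Un_disjoint)
    qed
    also have "\<dots> \<le> card {U \<in> Pow (insert x V). shatters F U}"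
    proof (rule card_mono)
      show "finite {U \<in> Pow (insert x V). shatters F U}" using fin by simp
      show "S1 \<union> S2 \<union> insert x ` (S1 \<inter> S2) \<subseteq> {U \<in> Pow (insert x V). shatters F U}"
      proof
        fix W assume W: "W \<in> S1 \<union> S2 \<union> insert x ` (S1 \<inter> S2)"
        have a1: "shatters F U" if "U \<in> S1" for U
          using that unfolding S1_def F1_def shatters_def by blast
        have a2: "shatters F U" if "U \<in> S2" for U
        proof -
          have U: "U \<subseteq> V" "shatters F2 U" using that S2_def by auto
          have "x \<notin> U" using U insert.hyps(2) by auto
          show ?thesis unfolding shatters_def
          proof (intro allI impI)
            fix U' assume "U' \<subseteq> U"
            then obtain B where "B \<in> F2" "B \<inter> U = U'" using U(2) unfolding shatters_def by blast
            then obtain A where "A \<in> F" "x \<in> A" "B = A - {x}" unfolding F2_def by auto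
            then have "A \<inter> U = U'" using \<open>B \<inter> U = U'\<close> \<open>x \<notin> U\<close> by auto
            then show "\<exists>F\<in>F. F \<inter> U = U'" using \<open>A \<in> F\<close> by blast
          qed
        qed
        have a3: "shatters F (insert x U)" if "U \<in> S1" "U \<in> S2" for U
        proof -
          have U: "U \<subseteq> V" "shatters F2 U" "shatters F1 U" using that S1_def S2_def by auto
          have "x \<notin> U" using U insert.hyps(2) by auto
          show ?thesis unfolding shatters_def
          proof (intro allI impI)
            fix U' assume U': "U' \<subseteq> insert x U"
            show "\<exists>F\<in>F. F \<inter> insert x U = U'"
            proof (cases "x \<in> U'")
              case True
              have "U' - {x} \<subseteq> U" using U' by auto
              then obtain B where "B \<in> F2" "B \<inter> U = U' - {x}" using U(2) unfolding shatters_def by blast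
              then obtain A where "A \<in> F" "x \<in> A" "B = A - {x}" unfolding F2_def by auto
              then have "A \<inter> insert x U = U'" using \<open>B \<inter> U = U' - {x}\<close> \<open>x \<notin> U\<close> True by auto
              then show ?thesis using \<open>A \<in> F\<close> by blast
            next
              case False
              have "U' \<subseteq> U" using U' False by auto
              then obtain A where "A \<in> F1" "A \<inter> U = U'" using U(3) unfolding shatters_def by blast
              then have "A \<in> F" "x \<notin> A" unfolding F1_def by auto
              then have "A \<inter> insert x U = U'" using \<open>A \<inter> U = U'\<close> by auto
              then show ?thesis using \<open>A \<in> F\<close> by blast
            qed
          qed
        qed
        show "W \<in> {U \<in> Pow (insert x V). shatters F U}"
          using W a1 a2 a3 unfolding S1_def S2_def by auto
      qed
    qed
    finally show "card F \<le> card {U \<in> Pow (insert x V). shatters F U}"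
      using cF h1 h2 by linarith
  qed
qed

lemma ext_vc:
  assumes "vc_dim_less V H k" "finite V"
  shows "vc_dim_less V (ext k V H) k"
  unfolding vc_dim_less_def
proof (intro allI impI, rule ccontr)
  fix U assume U: "U \<subseteq> V" "shatters (ext k V H) U" "\<not> card U < k"
  then obtain S where S: "S \<subseteq> U" "card S = k"
    by (meson not_less obtain_subset_with_card_n)
  have "shatters H S" unfolding shatters_def
  proof (intro allI impI)
    fix S' assume "S' \<subseteq> S"
    then have "S' \<subseteq> U" using S by auto
    then obtain E where E: "E \<in> ext k V H" "E \<inter> U = S'" using U(2) unfolding shatters_def by blast
    have "E \<inter> S = S'" using E(2) S(1) \<open>S' \<subseteq> S\<close> by auto
    then have "(S', S) \<in> traces k V E" unfolding traces_def using S U(1) \<open>S' \<subseteq> S\<close> by auto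
    then have "(S', S) \<in> traces_hg k V H" using E(1) unfolding ext_def by auto
    then obtain F where "F \<in> H" "(S', S) \<in> traces k V F" unfolding traces_hg_def by auto
    then show "\<exists>F\<in>H. F \<inter> S = S'" unfolding traces_def by auto
  qed
  then have "card S < k" using assms(1) S U(1) unfolding vc_dim_less_def by auto
  then show False using S by simp
qed

lemma small_count:
  assumes "finite V" "V \<noteq> {}"
  shows "real (card {U \<in> Pow V. card U < k}) \<le> real k * real (card V) ^ k"
proof -
  let ?n = "card V"
  have n1: "?n \<ge> 1" using assms by (simp add: Suc_leI card_gt_0_iff)
  have eq: "{U \<in> Pow V. card U < k} = (\<Union>i\<in>{..<k}. {B. B \<subseteq> V \<and> card B = i})" by auto
  have "card {U \<in> Pow V. card U < k} \<le> (\<Sum>i<k. card {B. B \<subseteq> V \<and> card B = i})"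
    unfolding eq by (rule card_UN_le) simp
  also have "\<dots> = (\<Sum>i<k. ?n choose i)" using n_subsets[OF assms(1)] by simp
  also have "\<dots> \<le> (\<Sum>i<k. ?n ^ k)"
  proof (rule sum_mono)
    fix i assume "i \<in> {..<k}"
    then have "?n ^ i \<le> ?n ^ k" using n1 by (intro power_increasing) auto
    then show "?n choose i \<le> ?n ^ k" using binomial_le_pow[of i ?n] binomial_eq_0[of ?n i]
      by (cases "i \<le> ?n") (auto simp: binomial_eq_0)
  qed
  also have "\<dots> = k * ?n ^ k" by simp
  finally have "card {U \<in> Pow V. card U < k} \<le> k * ?n ^ k" .
  then show ?thesis by (metis of_nat_le_iff of_nat_mult of_nat_power)
qed

theorem corollary2:
  fixes k :: nat
  shows "\<exists>C::real. \<forall>(V::'a set) H.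
           finite V \<and> V \<noteq> {} \<and> (\<forall>F\<in>H. F \<subseteq> V) \<and> vc_dim_less V H k \<longrightarrow>
           real (card (ext k V H)) \<le> C * real (card V) ^ k"
proof (intro exI allI impI)
  fix V :: "'a set" and H
  assume a: "finite V \<and> V \<noteq> {} \<and> (\<forall>F\<in>H. F \<subseteq> V) \<and> vc_dim_less V H k"
  have sub: "ext k V H \<subseteq> Pow V" unfolding ext_def by auto
  have vc: "vc_dim_less V (ext k V H) k" using ext_vc a by blast
  have "card (ext k V H) \<le> card {U \<in> Pow V. shatters (ext k V H) U}"
    using pajor a sub by blast
  also have "\<dots> \<le> card {U \<in> Pow V. card U < k}"
    using vc a unfolding vc_dim_less_def by (intro card_mono) auto
  finally have "real (card (ext k V H)) \<le> real (card {U \<in> Pow V. card U < k})" by simp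
  also have "\<dots> \<le> real k * real (card V) ^ k" using small_count a by blast
  finally show "real (card (ext k V H)) \<le> real k * real (card V) ^ k" .
qed

end
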